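(* There is an absolute constant $C$ such that for every horizon $T\ge 2$ there exists a randomized forecasting algorithm (making predictions in a finite subset of $(0,1)$) which, against every adversary, guarantees $\mathbb{E}[\mathsf{SReg}^{\ell}]\le C\,T^{1/3}(\log T)^{5/3}$ for the log loss $\ell$, where the expectation is over the algorithm's internal randomness. Equivalently, $\mathbb{E}[\mathsf{KLCal}]\le C\,T^{1/3}(\log T)^{5/3}$.
   Context: Forecasting protocol: for $t=1,\dots,T$, the forecaster (randomly) predicts $p_t\in[0,1]$ and simultaneously the adversary chooses $y_t\in\{0,1\}$, which is then revealed; the adversary is oblivious, i.e. it fixes $y_1,\dots,y_T$ in advance with knowledge of the forecaster's algorithm. Log loss: $\ell(p,y)=-y\log p-(1-y)\log(1-p)$. Swap regret: $\mathsf{SReg}^\ell:=\sup_{\sigma:[0,1]\to[0,1]}\sum_{t=1}^T(\ell(p_t,y_t)-\ell(\sigma(p_t),y_t))$. With $\rho_p=\frac{\sum_t y_t\mathbb{1}\{p_t=p\}}{\sum_t\mathbb{1}\{p_t=p\}}$ ($0/0=0$) and Bernoulli KL $\mathsf{KL}(q,p)=q\log\frac qp+(1-q)\log\frac{1-q}{1-p}$, $\mathsf{KLCal}:=\sum_{p}\sum_t\mathbb{1}\{p_t=p\}\mathsf{KL}(\rho_p,p)$, the outer sum over the (finitely many) values predicted; for the log loss $\mathsf{SReg}^\ell=\mathsf{KLCal}$. *)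

theory Defs
  imports "HOL-Probability.Probability"
begin

(* Rounds are indexed t = 0, ..., T-1; outcomes y_t are booleans (True = 1).
   A deterministic forecasting strategy maps the round t and the list of past
   outcomes [y_0,...,y_{t-1}] to a prediction. A randomized algorithm is a
   probability distribution (pmf) over deterministic strategies; against an
   oblivious adversary (fixed sequence ys) this captures internal randomness. *)
type_synonym strategy = "nat \<Rightarrow> bool list \<Rightarrow> real"

definition preds :: "strategy \<Rightarrow> (nat \<Rightarrow> bool) \<Rightarrow> nat \<Rightarrow> real" where
  "preds f ys t = f t (map ys [0..<t])"

definition logloss :: "real \<Rightarrow> bool \<Rightarrow> ereal" where
  "logloss p y = (if y then (if p \<le> 0 then \<infinity> else ereal (- ln p))
                   else (if 1 \<le> p then \<infinity> else ereal (- ln (1 - p))))"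

definition SReg :: "nat \<Rightarrow> (nat \<Rightarrow> real) \<Rightarrow> (nat \<Rightarrow> bool) \<Rightarrow> ereal" where
  "SReg T ps ys = Sup {(\<Sum>t<T. logloss (ps t) (ys t) - logloss (\<sigma> (ps t)) (ys t)) | \<sigma>.
       \<forall>x\<in>{0..1}. \<sigma> x \<in> {0..1}}"

(* Bernoulli KL divergence, with 0 log 0 = 0 (Isabelle: ln 0 = 0) *)
definition KL :: "real \<Rightarrow> real \<Rightarrow> real" where
  "KL q p = q * ln (q / p) + (1 - q) * ln ((1 - q) / (1 - p))"

definition rho :: "nat \<Rightarrow> (nat \<Rightarrow> real) \<Rightarrow> (nat \<Rightarrow> bool) \<Rightarrow> real \<Rightarrow> real" where
  "rho T ps ys p = real (card {t. t < T \<and> ys t \<and> ps t = p}) / real (card {t. t < T \<and> ps t = p})"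

definition KLCal :: "nat \<Rightarrow> (nat \<Rightarrow> real) \<Rightarrow> (nat \<Rightarrow> bool) \<Rightarrow> real" where
  "KLCal T ps ys = (\<Sum>p\<in>ps ` {..<T}. real (card {t. t < T \<and> ps t = p}) * KL (rho T ps ys p) p)"

end

theory Submission
  imports Defs
begin


definition lr :: "real \<Rightarrow> bool \<Rightarrow> real" where
  "lr p y = (if y then - ln p else - ln (1 - p))"

lemma KL_nonneg:
  assumes "0 < q" "q < 1" "0 < p" "p < 1"
  shows "0 \<le> KL q p"
proof -
  have a: "ln (p / q) \<le> p / q - 1" using assms by (intro ln_le_minus_one) auto
  have b: "ln ((1-p) / (1-q)) \<le> (1-p) / (1-q) - 1" using assms by (intro ln_le_minus_one) auto
  have "q * ln (p / q) + (1-q) * ln ((1-p)/(1-q)) \<le> q * (p/q - 1) + (1-q) * ((1-p)/(1-q) - 1)"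
    using a b assms by (intro add_mono mult_left_mono) auto
  also have "\<dots> = 0" using assms by (simp add: field_simps)
  finally have "q * ln (p / q) + (1-q) * ln ((1-p)/(1-q)) \<le> 0" .
  moreover have "ln (p/q) = - ln (q/p)" "ln ((1-p)/(1-q)) = - ln ((1-q)/(1-p))"
    using assms by (simp_all add: ln_div)
  ultimately show ?thesis unfolding KL_def by simp
qed

lemma KL_chi:
  assumes "0 < q" "q < 1" "0 < p" "p < 1"
  shows "KL q p \<le> (q - p)^2 / (p * (1 - p))"
proof -
  have a: "ln (q / p) \<le> q / p - 1" using assms by (intro ln_le_minus_one) auto
  have b: "ln ((1-q) / (1-p)) \<le> (1-q) / (1-p) - 1" using assms by (intro ln_le_minus_one) auto
  have "KL q p \<le> q * (q/p - 1) + (1-q) * ((1-q)/(1-p) - 1)"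
    unfolding KL_def using a b assms by (intro add_mono mult_left_mono) auto
  also have "q/p - 1 = (q - p)/p" using assms by (simp add: field_simps)
  also have "(1-q)/(1-p) - 1 = (p - q)/(1-p)" using assms by (simp add: field_simps)
  also have "q * ((q - p) / p) + (1 - q) * ((p - q) / (1 - p)) = (q*(q-p)*(1-p) + (1-q)*(p-q)*p)/(p*(1-p))"
    using assms by (simp add: add_divide_distrib)
  also have "q*(q-p)*(1-p) + (1-q)*(p-q)*p = (q-p)^2" by (simp add: power2_eq_square algebra_simps)
  finally show ?thesis .
qed

lemma KL_self: "KL p p = 0"
  by (cases "p = 0"; cases "p = 1") (auto simp: KL_def)

lemma KL_diff:
  assumes "0 < q" "q < 1" "0 < p" "p < 1" "0 < L" "L < 1"
  shows "q * (lr p True - lr L True) + (1-q) * (lr p False - lr L False) = KL q p - KL q L"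
proof -
  have "KL q p = q * (ln q - ln p) + (1-q) * (ln (1-q) - ln (1-p))"
    using assms by (simp add: KL_def ln_div)
  moreover have "KL q L = q * (ln q - ln L) + (1-q) * (ln (1-q) - ln (1-L))"
    using assms by (simp add: KL_def ln_div)
  ultimately show ?thesis by (simp add: lr_def algebra_simps)
qed

lemma binom_bound:
  assumes "0 \<le> (\<theta>::real)" "\<theta> \<le> 1" "k \<le> n"
  shows "real (n choose k) * \<theta>^k * (1-\<theta>)^(n-k) \<le> 1"
proof -
  have "(\<theta> + (1-\<theta>))^n = (\<Sum>j\<le>n. real (n choose j) * \<theta>^j * (1-\<theta>)^(n-j))"
    by (rule binomial_ring)
  moreover have "(\<theta> + (1-\<theta>))^n = 1" by simp
  ultimately have s: "(\<Sum>j\<le>n. real (n choose j) * \<theta>^j * (1-\<theta>)^(n-j)) = 1" by simp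
  have "real (n choose k) * \<theta>^k * (1-\<theta>)^(n-k) \<le> (\<Sum>j\<le>n. real (n choose j) * \<theta>^j * (1-\<theta>)^(n-j))"
    using assms by (intro member_le_sum) auto
  with s show ?thesis by simp
qed

definition G :: "nat \<Rightarrow> nat \<Rightarrow> real" where
  "G c k = ln (fact (c+1)) - ln (fact k) - ln (fact (c - k))"

lemma ln_pow_gen:
  assumes "0 \<le> (x::real)" "k > 0 \<longrightarrow> x > 0"
  shows "ln (x ^ k) = real k * ln x"
  using assms by (cases "k = 0") (auto simp: ln_realpow)

lemma G_bound:
  assumes "k \<le> c" "0 \<le> \<theta>" "\<theta> \<le> 1" "k > 0 \<longrightarrow> \<theta> > 0" "k < c \<longrightarrow> \<theta> < 1"
  shows "G c k \<le> ln (real c + 1) + real k * (- ln \<theta>) + (real c - real k) * (- ln (1 - \<theta>))"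
proof -
  have f0: "fact k * fact (c - k) * (c choose k) = fact c"
    using binomial_fact_lemma[OF assms(1)] .
  have f: "(fact c :: real) = real (c choose k) * fact k * fact (c - k)"
  proof -
    have "real (fact k * fact (c - k) * (c choose k)) = real (fact c)" using f0 by simp
    thus ?thesis by (simp add: of_nat_mult mult_ac)
  qed
  have cpos: "real (c choose k) > 0" using assms(1) by simp
  have "(fact (c+1) :: real) = (real c + 1) * fact c" by simp
  hence G: "G c k = ln (real c + 1) + ln (real (c choose k))"
    unfolding G_def using f cpos by (simp add: ln_mult)
  have p1: "\<theta>^k > 0" using assms by (cases "k = 0") auto
  have p2: "(1-\<theta>)^(c-k) > 0" using assms by (cases "c - k = 0") auto
  have "ln (real (c choose k) * \<theta>^k * (1-\<theta>)^(c-k)) \<le> ln 1"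
  proof -
    have "real (c choose k) * \<theta>^k * (1-\<theta>)^(c-k) > 0" using cpos p1 p2 by simp
    thus ?thesis using binom_bound[OF assms(2,3,1)] by (subst ln_le_cancel_iff) simp_all
  qed
  also have "ln (real (c choose k) * \<theta>^k * (1-\<theta>)^(c-k)) =
     ln (real (c choose k)) + ln (\<theta>^k) + ln ((1 - \<theta>)^(c-k))"
  proof -
    have "ln (real (c choose k) * \<theta>^k * (1-\<theta>)^(c-k)) = ln (real (c choose k) * \<theta>^k) + ln ((1-\<theta>)^(c-k))"
      by (rule ln_mult_pos) (use cpos p1 p2 in auto)
    also have "ln (real (c choose k) * \<theta>^k) = ln (real (c choose k)) + ln (\<theta>^k)"
      by (rule ln_mult_pos) (use cpos p1 p2 in auto)
    finally show ?thesis .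
  qed
  also have "ln (\<theta>^k) = real k * ln \<theta>" using assms by (intro ln_pow_gen) auto
  also have "ln ((1 - \<theta>)^(c-k)) = real (c - k) * ln (1 - \<theta>)" using assms by (intro ln_pow_gen) auto
  finally have "ln (real (c choose k)) + real k * ln \<theta> + real (c - k) * ln (1 - \<theta>) \<le> 0" by simp
  moreover have "real (c - k) = real c - real k" using assms(1) by simp
  ultimately show ?thesis using G by (simp add: algebra_simps)
qed



definition cnt :: "(nat \<Rightarrow> real) \<Rightarrow> nat \<Rightarrow> real \<Rightarrow> nat" where
  "cnt ps n p = card {t. t < n \<and> ps t = p}"
definition one :: "(nat \<Rightarrow> real) \<Rightarrow> (nat \<Rightarrow> bool) \<Rightarrow> nat \<Rightarrow> real \<Rightarrow> nat" where
  "one ps ys n p = card {t. t < n \<and> ys t \<and> ps t = p}"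
definition Lap :: "(nat \<Rightarrow> real) \<Rightarrow> (nat \<Rightarrow> bool) \<Rightarrow> nat \<Rightarrow> real \<Rightarrow> real" where
  "Lap ps ys n p = (real (one ps ys n p) + 1) / (real (cnt ps n p) + 2)"

lemma card_Suc_aux:
  "card {t. t < Suc n \<and> P t} = card {t. t < n \<and> P t} + (if P n then 1 else 0)"
proof -
  have fin: "finite {t. t < n \<and> P t}" by simp
  show ?thesis
  proof (cases "P n")
    case True
    have "{t. t < Suc n \<and> P t} = insert n {t. t < n \<and> P t}" using True by (auto simp: less_Suc_eq)
    thus ?thesis using True fin by simp
  next
    case False
    have "{t. t < Suc n \<and> P t} = {t. t < n \<and> P t}" using False by (auto simp: less_Suc_eq)
    thus ?thesis using False by simp
  qed
qed

lemma cnt_Suc: "cnt ps (Suc n) p = cnt ps n p + (if ps n = p then 1 else 0)"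
  unfolding cnt_def by (rule card_Suc_aux)

lemma one_Suc: "one ps ys (Suc n) p = one ps ys n p + (if ys n \<and> ps n = p then 1 else 0)"
  unfolding one_def by (rule card_Suc_aux)

lemma one_le_cnt: "one ps ys n p \<le> cnt ps n p"
  unfolding one_def cnt_def by (rule card_mono) auto

lemma cnt_le: "cnt ps n p \<le> n"
proof -
  have "cnt ps n p \<le> card {..<n}" unfolding cnt_def by (rule card_mono) auto
  thus ?thesis by simp
qed

lemma cnt_0 [simp]: "cnt ps 0 p = 0" and one_0 [simp]: "one ps ys 0 p = 0"
  by (auto simp: cnt_def one_def)

lemma sum_decomp:
  assumes "finite S" "\<forall>t<n. ps t \<in> S"
  shows "(\<Sum>t<n. h (ps t) (ys t)) = (\<Sum>p\<in>S. real (one ps ys n p) * h p True + (real (cnt ps n p) - real (one ps ys n p)) * h p False)"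
  using assms(2)
proof (induction n)
  case 0
  then show ?case by simp
next
  case (Suc n)
  have IH: "(\<Sum>t<n. h (ps t) (ys t)) = (\<Sum>p\<in>S. real (one ps ys n p) * h p True + (real (cnt ps n p) - real (one ps ys n p)) * h p False)"
    using Suc by auto
  have step: "real (one ps ys (Suc n) p) * h p True + (real (cnt ps (Suc n) p) - real (one ps ys (Suc n) p)) * h p False
     = (real (one ps ys n p) * h p True + (real (cnt ps n p) - real (one ps ys n p)) * h p False)
       + (if p = ps n then h p (ys n) else 0)" for p
    by (cases "ps n = p"; cases "ys n") (auto simp: cnt_Suc one_Suc algebra_simps)
  have "ps n \<in> S" using Suc by auto
  have "(\<Sum>t<Suc n. h (ps t) (ys t)) = (\<Sum>t<n. h (ps t) (ys t)) + h (ps n) (ys n)" by simp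
  also have "\<dots> = (\<Sum>p\<in>S. (real (one ps ys n p) * h p True + (real (cnt ps n p) - real (one ps ys n p)) * h p False)
       + (if p = ps n then h p (ys n) else 0))"
    using IH \<open>ps n \<in> S\<close> assms(1) by (simp add: sum.distrib)
  also have "\<dots> = (\<Sum>p\<in>S. real (one ps ys (Suc n) p) * h p True + (real (cnt ps (Suc n) p) - real (one ps ys (Suc n) p)) * h p False)"
    by (simp only: step)
  finally show ?case .
qed

lemma G_step1:
  assumes "k \<le> c"
  shows "G (Suc c) (Suc k) = G c k + lr ((real k + 1) / (real c + 2)) True"
proof -
  have "(fact (Suc c + 1) :: real) = (real c + 2) * fact (c + 1)" by (simp add: algebra_simps)
  moreover have "(fact (Suc k) :: real) = (real k + 1) * fact k" by (simp add: algebra_simps)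
  moreover have "Suc c - Suc k = c - k" by simp
  ultimately show ?thesis unfolding G_def lr_def
    by (simp add: ln_mult_pos ln_div add_pos_pos add.commute)
qed

lemma G_step0:
  assumes "k \<le> c"
  shows "G (Suc c) k = G c k + lr ((real k + 1) / (real c + 2)) False"
proof -
  have "(fact (Suc c + 1) :: real) = (real c + 2) * fact (c + 1)" by (simp add: algebra_simps)
  moreover have "Suc c - k = Suc (c - k)" using assms by simp
  moreover have "(fact (Suc (c - k)) :: real) = (real c - real k + 1) * fact (c - k)"
    using assms by (simp add: of_nat_diff algebra_simps)
  moreover have "1 - (real k + 1) / (real c + 2) = (real c - real k + 1) / (real c + 2)"
    by (simp add: field_simps)
  moreover have "real c - real k + 1 > 0" using assms by simp
  ultimately show ?thesis unfolding G_def lr_def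
    by (simp add: ln_mult_pos ln_div add_pos_pos add.commute)
qed

lemma lap_sum:
  assumes "finite S" "\<forall>t<n. ps t \<in> S"
  shows "(\<Sum>t<n. lr (Lap ps ys t (ps t)) (ys t)) = (\<Sum>p\<in>S. G (cnt ps n p) (one ps ys n p))"
  using assms(2)
proof (induction n)
  case 0
  then show ?case by (simp add: G_def)
next
  case (Suc n)
  have IH: "(\<Sum>t<n. lr (Lap ps ys t (ps t)) (ys t)) = (\<Sum>p\<in>S. G (cnt ps n p) (one ps ys n p))"
    using Suc by auto
  have step: "G (cnt ps (Suc n) p) (one ps ys (Suc n) p) = G (cnt ps n p) (one ps ys n p)
       + (if p = ps n then lr (Lap ps ys n p) (ys n) else 0)" for p
    using one_le_cnt[of ps ys n p]
    by (cases "ps n = p"; cases "ys n") (auto simp: cnt_Suc one_Suc Lap_def G_step1 G_step0)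
  have "ps n \<in> S" using Suc by auto
  have "(\<Sum>t<Suc n. lr (Lap ps ys t (ps t)) (ys t)) = (\<Sum>t<n. lr (Lap ps ys t (ps t)) (ys t)) + lr (Lap ps ys n (ps n)) (ys n)" by simp
  also have "\<dots> = (\<Sum>p\<in>S. G (cnt ps n p) (one ps ys n p) + (if p = ps n then lr (Lap ps ys n p) (ys n) else 0))"
    using IH \<open>ps n \<in> S\<close> assms(1) by (simp add: sum.distrib)
  also have "\<dots> = (\<Sum>p\<in>S. G (cnt ps (Suc n) p) (one ps ys (Suc n) p))"
    by (simp only: step)
  finally show ?case .
qed



definition D :: "(nat \<Rightarrow> real) \<Rightarrow> (nat \<Rightarrow> bool) \<Rightarrow> nat \<Rightarrow> real" where
  "D ps ys n = (\<Sum>t<n. lr (ps t) (ys t) - lr (Lap ps ys t (ps t)) (ys t))"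

lemma bucket_KL:
  assumes "k \<le> c" "0 < p" "p < 1"
  shows "real c * KL (real k / real c) p \<le> real k * lr p True + (real c - real k) * lr p False - G c k + ln (real c + 1)"
proof (cases "c = 0")
  case True
  then show ?thesis using assms by (simp add: G_def)
next
  case False
  define \<rho> where "\<rho> = real k / real c"
  have r0: "0 \<le> \<rho>" "\<rho> \<le> 1" using False assms unfolding \<rho>_def by auto
  have e1: "real c * (\<rho> * ln (\<rho> / p)) = real k * (ln \<rho> - ln p)"
  proof (cases "k = 0")
    case True then show ?thesis by (simp add: \<rho>_def)
  next
    case False
    hence "\<rho> > 0" using \<open>c \<noteq> 0\<close> unfolding \<rho>_def by simp
    hence "ln (\<rho> / p) = ln \<rho> - ln p" using assms by (simp add: ln_div)
    moreover have "real c * \<rho> = real k" using \<open>c \<noteq> 0\<close> by (simp add: \<rho>_def)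
    ultimately show ?thesis by (metis mult.assoc)
  qed
  have e2: "real c * ((1 - \<rho>) * ln ((1 - \<rho>) / (1 - p))) = (real c - real k) * (ln (1 - \<rho>) - ln (1 - p))"
  proof (cases "k = c")
    case True then show ?thesis using \<open>c \<noteq> 0\<close> by (simp add: \<rho>_def)
  next
    case False
    hence "\<rho> < 1" using \<open>c \<noteq> 0\<close> assms(1) unfolding \<rho>_def by simp
    moreover have "real c * (1 - \<rho>) = real c - real k" using \<open>c \<noteq> 0\<close> by (simp add: \<rho>_def field_simps)
    moreover have "ln ((1 - \<rho>) / (1 - p)) = ln (1 - \<rho>) - ln (1 - p)" using assms calculation by (simp add: ln_div)
    ultimately show ?thesis by (metis mult.assoc)
  qed
  have "real c * KL \<rho> p = real k * (ln \<rho> - ln p) + (real c - real k) * (ln (1 - \<rho>) - ln (1 - p))"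
    unfolding KL_def using e1 e2 by (simp add: distrib_left)
  moreover have "G c k \<le> ln (real c + 1) + real k * (- ln \<rho>) + (real c - real k) * (- ln (1 - \<rho>))"
    using False assms(1) r0 by (intro G_bound) (auto simp: \<rho>_def)
  ultimately show ?thesis unfolding \<rho>_def[symmetric] lr_def by (simp add: algebra_simps)
qed

lemma KLCal_le:
  assumes S: "finite S" "S \<subseteq> {0<..<1}" and ps: "\<forall>t<T. ps t \<in> S"
  shows "KLCal T ps ys \<le> D ps ys T + real (card S) * ln (real T + 1)"
proof -
  have img: "ps ` {..<T} \<subseteq> S" using ps by auto
  have "KLCal T ps ys = (\<Sum>p\<in>ps ` {..<T}. real (cnt ps T p) * KL (real (one ps ys T p) / real (cnt ps T p)) p)"
    unfolding KLCal_def rho_def cnt_def one_def ..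
  also have "\<dots> = (\<Sum>p\<in>S. real (cnt ps T p) * KL (real (one ps ys T p) / real (cnt ps T p)) p)"
  proof (rule sum.mono_neutral_left[OF S(1) img], safe)
    fix p assume "p \<in> S" "p \<notin> ps ` {..<T}"
    hence "{t. t < T \<and> ps t = p} = {}" by auto
    thus "real (cnt ps T p) * KL (real (one ps ys T p) / real (cnt ps T p)) p = 0"
      unfolding cnt_def by simp
  qed
  also have "\<dots> \<le> (\<Sum>p\<in>S. real (one ps ys T p) * lr p True + (real (cnt ps T p) - real (one ps ys T p)) * lr p False
        - G (cnt ps T p) (one ps ys T p) + ln (real (cnt ps T p) + 1))"
    using S(2) by (intro sum_mono bucket_KL one_le_cnt) auto
  also have "\<dots> = (\<Sum>p\<in>S. real (one ps ys T p) * lr p True + (real (cnt ps T p) - real (one ps ys T p)) * lr p False)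
        - (\<Sum>p\<in>S. G (cnt ps T p) (one ps ys T p)) + (\<Sum>p\<in>S. ln (real (cnt ps T p) + 1))"
    by (simp add: sum.distrib sum_subtractf)
  also have "(\<Sum>p\<in>S. real (one ps ys T p) * lr p True + (real (cnt ps T p) - real (one ps ys T p)) * lr p False)
     = (\<Sum>t<T. lr (ps t) (ys t))"
    using sum_decomp[OF S(1) ps, of lr ys] by simp
  also have "(\<Sum>p\<in>S. G (cnt ps T p) (one ps ys T p)) = (\<Sum>t<T. lr (Lap ps ys t (ps t)) (ys t))"
    using lap_sum[OF S(1) ps, of ys] by simp
  also have "(\<Sum>p\<in>S. ln (real (cnt ps T p) + 1)) \<le> real (card S) * ln (real T + 1)"
  proof -
    have "(\<Sum>p\<in>S. ln (real (cnt ps T p) + 1)) \<le> (\<Sum>p\<in>S. ln (real T + 1))"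
      using cnt_le by (intro sum_mono) auto
    thus ?thesis by simp
  qed
  finally show ?thesis unfolding D_def by (simp add: sum_subtractf)
qed

lemma logloss_real: "0 < p \<Longrightarrow> p < 1 \<Longrightarrow> logloss p y = ereal (lr p y)"
  by (simp add: logloss_def lr_def)

lemma logloss_fin: "logloss q y \<noteq> \<infinity> \<Longrightarrow> logloss q y = ereal (lr q y) \<and> (y \<longrightarrow> q > 0) \<and> (\<not> y \<longrightarrow> q < 1)"
  by (auto simp: logloss_def lr_def split: if_splits)

lemma ereal_sum_minf:
  fixes f :: "'a \<Rightarrow> ereal"
  assumes "finite I" "i \<in> I" "f i = -\<infinity>" "\<forall>j\<in>I. f j \<noteq> \<infinity>"
  shows "sum f I = -\<infinity>"
proof -
  have "sum f I = f i + sum f (I - {i})" using assms by (simp add: sum.remove)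
  moreover have "sum f (I - {i}) \<noteq> \<infinity>" using assms by (simp add: sum_Pinfty)
  ultimately show ?thesis using assms(3) by simp
qed

lemma SReg_le:
  assumes S: "finite S" "S \<subseteq> {0<..<1}" and ps: "\<forall>t<T. ps t \<in> S"
  shows "SReg T ps ys \<le> ereal (D ps ys T + real (card S) * ln (real T + 1))"
  unfolding SReg_def
proof (rule Sup_least, clarify)
  fix \<sigma> :: "real \<Rightarrow> real"
  assume \<sigma>: "\<forall>x\<in>{0..1}. \<sigma> x \<in> {0..1}"
  have pin: "0 < ps t \<and> ps t < 1" if "t < T" for t using ps S(2) that by auto
  show "(\<Sum>t<T. logloss (ps t) (ys t) - logloss (\<sigma> (ps t)) (ys t)) \<le> ereal (D ps ys T + real (card S) * ln (real T + 1))"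
  proof (cases "\<exists>t<T. logloss (\<sigma> (ps t)) (ys t) = \<infinity>")
    case True
    then obtain t0 where t0: "t0 < T" "logloss (\<sigma> (ps t0)) (ys t0) = \<infinity>" by auto
    have "(\<Sum>t<T. logloss (ps t) (ys t) - logloss (\<sigma> (ps t)) (ys t)) = -\<infinity>"
    proof (rule ereal_sum_minf[of _ t0])
      show "logloss (ps t0) (ys t0) - logloss (\<sigma> (ps t0)) (ys t0) = - \<infinity>"
        using t0 pin[OF t0(1)] by (simp add: logloss_real)
      show "\<forall>j\<in>{..<T}. logloss (ps j) (ys j) - logloss (\<sigma> (ps j)) (ys j) \<noteq> \<infinity>"
      proof
        fix j assume "j \<in> {..<T}"
        hence "logloss (ps j) (ys j) = ereal (lr (ps j) (ys j))" using pin by (simp add: logloss_real)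
        moreover have "logloss (\<sigma> (ps j)) (ys j) \<noteq> -\<infinity>" by (simp add: logloss_def)
        ultimately show "logloss (ps j) (ys j) - logloss (\<sigma> (ps j)) (ys j) \<noteq> \<infinity>"
          by (cases "logloss (\<sigma> (ps j)) (ys j)") auto
      qed
    qed (use t0 in auto)
    thus ?thesis by simp
  next
    case False
    hence fin: "\<And>t. t < T \<Longrightarrow> logloss (\<sigma> (ps t)) (ys t) = ereal (lr (\<sigma> (ps t)) (ys t))
       \<and> (ys t \<longrightarrow> \<sigma> (ps t) > 0) \<and> (\<not> ys t \<longrightarrow> \<sigma> (ps t) < 1)"
      using logloss_fin by blast
    have "(\<Sum>t<T. logloss (ps t) (ys t) - logloss (\<sigma> (ps t)) (ys t))
        = (\<Sum>t<T. ereal (lr (ps t) (ys t) - lr (\<sigma> (ps t)) (ys t)))"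
      using fin pin by (intro sum.cong) (auto simp: logloss_real)
    also have "\<dots> = ereal (\<Sum>t<T. lr (ps t) (ys t) - lr (\<sigma> (ps t)) (ys t))"
      by (simp add: sum_ereal)
    also have "(\<Sum>t<T. lr (ps t) (ys t) - lr (\<sigma> (ps t)) (ys t)) \<le> D ps ys T + real (card S) * ln (real T + 1)"
    proof -
      have bnd: "G (cnt ps T p) (one ps ys T p) - ln (real (cnt ps T p) + 1) \<le>
          real (one ps ys T p) * lr (\<sigma> p) True + (real (cnt ps T p) - real (one ps ys T p)) * lr (\<sigma> p) False"
        if "p \<in> S" for p
      proof -
        have p01: "p \<in> {0..1}" using that S(2) by auto
        have pos: "\<sigma> p > 0" if "one ps ys T p > 0"
        proof -
          from that have "{t. t < T \<and> ys t \<and> ps t = p} \<noteq> {}" unfolding one_def by (metis card.empty less_irrefl)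
          then obtain t where "t < T" "ys t" "ps t = p" by auto
          thus ?thesis using fin by auto
        qed
        have lt1: "\<sigma> p < 1" if "one ps ys T p < cnt ps T p"
        proof -
          have "\<not> {t. t < T \<and> ps t = p} \<subseteq> {t. t < T \<and> ys t \<and> ps t = p}"
          proof
            assume "{t. t < T \<and> ps t = p} \<subseteq> {t. t < T \<and> ys t \<and> ps t = p}"
            hence "cnt ps T p \<le> one ps ys T p" unfolding cnt_def one_def by (intro card_mono) auto
            thus False using that by simp
          qed
          then obtain t where "t < T" "\<not> ys t" "ps t = p" by auto
          thus ?thesis using fin by auto
        qed
        have "G (cnt ps T p) (one ps ys T p) \<le> ln (real (cnt ps T p) + 1) + real (one ps ys T p) * (- ln (\<sigma> p))
             + (real (cnt ps T p) - real (one ps ys T p)) * (- ln (1 - \<sigma> p))"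
          using \<sigma> p01 pos lt1 one_le_cnt by (intro G_bound) auto
        thus ?thesis by (simp add: lr_def)
      qed
      have "(\<Sum>t<T. lr (\<sigma> (ps t)) (ys t)) = (\<Sum>p\<in>S. real (one ps ys T p) * lr (\<sigma> p) True + (real (cnt ps T p) - real (one ps ys T p)) * lr (\<sigma> p) False)"
        using sum_decomp[OF S(1) ps, of "\<lambda>p y. lr (\<sigma> p) y" ys] by simp
      also have "\<dots> \<ge> (\<Sum>p\<in>S. G (cnt ps T p) (one ps ys T p) - ln (real (cnt ps T p) + 1))"
        using bnd by (intro sum_mono) auto
      finally have A: "(\<Sum>t<T. lr (\<sigma> (ps t)) (ys t)) \<ge> (\<Sum>p\<in>S. G (cnt ps T p) (one ps ys T p)) - (\<Sum>p\<in>S. ln (real (cnt ps T p) + 1))"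
        by (simp add: sum_subtractf)
      have B: "(\<Sum>p\<in>S. G (cnt ps T p) (one ps ys T p)) = (\<Sum>t<T. lr (Lap ps ys t (ps t)) (ys t))"
        using lap_sum[OF S(1) ps, of ys] by simp
      have C: "(\<Sum>p\<in>S. ln (real (cnt ps T p) + 1)) \<le> real (card S) * ln (real T + 1)"
      proof -
        have "(\<Sum>p\<in>S. ln (real (cnt ps T p) + 1)) \<le> (\<Sum>p\<in>S. ln (real T + 1))"
          using cnt_le by (intro sum_mono) auto
        thus ?thesis by simp
      qed
      show ?thesis using A B C unfolding D_def by (simp add: sum_subtractf)
    qed
    finally show ?thesis by simp
  qed
qed

lemma SReg_nonneg:
  assumes S: "S \<subseteq> {0<..<1}" and ps: "\<forall>t<T. ps t \<in> S"
  shows "0 \<le> SReg T ps ys"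
  unfolding SReg_def
proof (rule Sup_upper2[where u = "(\<Sum>t<T. logloss (ps t) (ys t) - logloss (id (ps t)) (ys t))"])
  show "(\<Sum>t<T. logloss (ps t) (ys t) - logloss (id (ps t)) (ys t)) \<in> {\<Sum>t<T. logloss (ps t) (ys t) - logloss (\<sigma> (ps t)) (ys t) |\<sigma>. \<forall>x\<in>{0..1}. \<sigma> x \<in> {0..1}}"
    by (rule CollectI, rule exI[of _ id]) auto
  have "(\<Sum>t<T. logloss (ps t) (ys t) - logloss (id (ps t)) (ys t)) = (\<Sum>t<T. 0)"
    using ps S by (intro sum.cong) (auto simp: logloss_real)
  thus "0 \<le> (\<Sum>t<T. logloss (ps t) (ys t) - logloss (id (ps t)) (ys t))" by simp
qed



definition pstar :: "real set \<Rightarrow> real \<Rightarrow> (real \<Rightarrow> real) \<Rightarrow> real" where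
  "pstar S p0 L = (if {p\<in>S. p \<le> L p} = {} then p0 else Max {p\<in>S. p \<le> L p})"
definition pnext :: "real set \<Rightarrow> real \<Rightarrow> (real \<Rightarrow> real) \<Rightarrow> real" where
  "pnext S p0 L = (if {q\<in>S. pstar S p0 L < q} = {} then pstar S p0 L else Min {q\<in>S. pstar S p0 L < q})"
definition slope :: "(real \<Rightarrow> real) \<Rightarrow> real \<Rightarrow> real" where
  "slope L p = (ln (L p) - ln p) - (ln (1 - L p) - ln (1 - p))"
definition lam :: "real set \<Rightarrow> real \<Rightarrow> (real \<Rightarrow> real) \<Rightarrow> real" where
  "lam S p0 L = (if slope L (pstar S p0 L) = slope L (pnext S p0 L) then 1
      else - slope L (pnext S p0 L) / (slope L (pstar S p0 L) - slope L (pnext S p0 L)))"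
definition stepd :: "real set \<Rightarrow> real \<Rightarrow> (real \<Rightarrow> real) \<Rightarrow> real pmf" where
  "stepd S p0 L = map_pmf (\<lambda>b. if b then pstar S p0 L else pnext S p0 L) (bernoulli_pmf (lam S p0 L))"

lemma pstar_in: "finite S \<Longrightarrow> p0 \<in> S \<Longrightarrow> pstar S p0 L \<in> S"
  unfolding pstar_def using Max_in[of "{p\<in>S. p \<le> L p}"] by auto

lemma pnext_in: "finite S \<Longrightarrow> p0 \<in> S \<Longrightarrow> pnext S p0 L \<in> S"
  unfolding pnext_def using Min_in[of "{q\<in>S. pstar S p0 L < q}"] pstar_in[of S p0 L] by auto

lemma stepd_set: "finite S \<Longrightarrow> p0 \<in> S \<Longrightarrow> set_pmf (stepd S p0 L) \<subseteq> S"
  unfolding stepd_def using pstar_in[of S p0 L] pnext_in[of S p0 L] by auto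

definition adjKL :: "real set \<Rightarrow> real \<Rightarrow> bool" where
  "adjKL S \<epsilon> = (\<forall>p\<in>S. \<forall>p'\<in>S. p < p' \<and> (\<forall>q\<in>S. \<not> (p < q \<and> q < p')) \<longrightarrow> KL p p' \<le> \<epsilon>)"

lemma step_bound:
  assumes S: "finite S" "S \<subseteq> {0<..<1}" "p0 \<in> S"
    and a: "a \<in> S" "a \<le> lo" and b: "b \<in> S" "hi \<le> b"
    and L: "\<forall>p\<in>S. lo \<le> L p \<and> L p \<le> hi" and lohi: "0 < lo" "hi < 1"
    and adj: "adjKL S \<epsilon>" and eps: "0 \<le> \<epsilon>"
  shows "measure_pmf.expectation (stepd S p0 L) (\<lambda>p. lr p y - lr (L p) y) \<le> \<epsilon>"
proof -
  define P where "P = {p\<in>S. p \<le> L p}"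
  have aP: "a \<in> P" using a L unfolding P_def by force
  hence Pne: "P \<noteq> {}" by auto
  have finP: "finite P" using S unfolding P_def by auto
  define x where "x = pstar S p0 L"
  have x: "x = Max P" unfolding x_def pstar_def P_def[symmetric] using Pne by simp
  have xP: "x \<in> P" using x Max_in[OF finP Pne] by simp
  hence xS: "x \<in> S" and xL: "x \<le> L x" unfolding P_def by auto
  have xmax: "p \<le> x" if "p \<in> S" "p \<le> L p" for p using that x finP unfolding P_def by auto
  define z where "z = pnext S p0 L"
  have zprops: "z \<in> S \<and> L z \<le> z \<and> x \<le> z \<and> KL x z \<le> \<epsilon>"
  proof (cases "{q\<in>S. x < q} = {}")
    case True
    hence z: "z = x" unfolding z_def pnext_def x_def by simp
    have "b \<le> x" using True b by force
    hence "L x \<le> x" using L xS b lohi by force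
    thus ?thesis using z xS eps by (simp add: KL_self)
  next
    case False
    hence z: "z = Min {q\<in>S. x < q}" unfolding z_def pnext_def x_def[symmetric] by (simp only: if_False)
    have finU: "finite {q\<in>S. x < q}" using S by auto
    have zU: "z \<in> {q\<in>S. x < q}" using z Min_in[OF finU False] by simp
    have zmin: "z \<le> q" if "q \<in> S" "x < q" for q using z finU that by auto
    have "\<not> z \<le> L z" using xmax zU by force
    moreover have "KL x z \<le> \<epsilon>" using adj xS zU zmin unfolding adjKL_def by force
    ultimately show ?thesis using zU by auto
  qed
  have x01: "0 < x" "x < 1" using xS S by auto
  have z01: "0 < z" "z < 1" using zprops S by auto
  have Lx01: "0 < L x" "L x < 1" using L xS lohi by force+
  have Lz01: "0 < L z" "L z < 1" using L zprops lohi by force+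
  define a1 where "a1 = ln (L x) - ln x"
  define b1 where "b1 = ln (1 - L x) - ln (1 - x)"
  define a2 where "a2 = ln (L z) - ln z"
  define b2 where "b2 = ln (1 - L z) - ln (1 - z)"
  have a1: "a1 \<ge> 0" unfolding a1_def using xL x01 by simp
  have b1: "b1 \<le> 0" unfolding b1_def using xL x01 Lx01 by simp
  have a2: "a2 \<le> 0" unfolding a2_def using zprops z01 Lz01 by simp
  have b2: "b2 \<ge> 0" unfolding b2_def using zprops z01 Lz01 by simp
  define l where "l = lam S p0 L"
  have l: "l = (if a1 - b1 = a2 - b2 then 1 else - (a2 - b2) / ((a1 - b1) - (a2 - b2)))"
    unfolding l_def lam_def x_def[symmetric] z_def[symmetric] slope_def a1_def b1_def a2_def b2_def ..
  have l01: "0 \<le> l" "l \<le> 1" using a1 b1 a2 b2 unfolding l by (auto simp: field_simps)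
  have lbal: "l * (a1 - b1) + (1 - l) * (a2 - b2) = 0"
  proof (cases "a1 - b1 = a2 - b2")
    case True
    hence "a1 - b1 = 0" "a2 - b2 = 0" using a1 b1 a2 b2 by linarith+
    then show ?thesis by simp
  next
    case False
    hence ne: "(a1 - b1) - (a2 - b2) \<noteq> 0" by simp
    show ?thesis unfolding l using False ne by (simp add: field_simps)
  qed
  have E: "measure_pmf.expectation (stepd S p0 L) (\<lambda>p. lr p y' - lr (L p) y') =
     l * (lr x y' - lr (L x) y') + (1 - l) * (lr z y' - lr (L z) y')" for y'
    unfolding stepd_def x_def[symmetric] z_def[symmetric] l_def[symmetric] using l01 by simp
  have ET: "measure_pmf.expectation (stepd S p0 L) (\<lambda>p. lr p True - lr (L p) True) = l * a1 + (1 - l) * a2"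
    unfolding E by (simp add: lr_def a1_def a2_def)
  have EF: "measure_pmf.expectation (stepd S p0 L) (\<lambda>p. lr p False - lr (L p) False) = l * b1 + (1 - l) * b2"
    unfolding E by (simp add: lr_def b1_def b2_def)
  have same: "l * a1 + (1 - l) * a2 = l * b1 + (1 - l) * b2" using lbal by (simp add: algebra_simps)
  have k1: "x * a1 + (1 - x) * b1 = KL x x - KL x (L x)"
    using KL_diff[OF x01 x01 Lx01] by (simp add: lr_def a1_def b1_def)
  have k2: "x * a2 + (1 - x) * b2 = KL x z - KL x (L z)"
    using KL_diff[OF x01 z01 Lz01] by (simp add: lr_def a2_def b2_def)
  have "x * (l * a1 + (1 - l) * a2) + (1 - x) * (l * b1 + (1 - l) * b2)
      = l * (x * a1 + (1 - x) * b1) + (1 - l) * (x * a2 + (1 - x) * b2)" by (simp add: algebra_simps)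
  also have "\<dots> = l * (- KL x (L x)) + (1 - l) * (KL x z - KL x (L z))" using k1 k2 by (simp add: KL_self)
  also have "\<dots> \<le> l * 0 + (1 - l) * \<epsilon>"
    using KL_nonneg[OF x01 Lx01] KL_nonneg[OF x01 Lz01] zprops l01
    by (intro add_mono mult_left_mono) auto
  also have "\<dots> \<le> \<epsilon>" using l01 eps by (simp add: mult_left_le_one_le)
  finally have comb: "x * (l * a1 + (1 - l) * a2) + (1 - x) * (l * b1 + (1 - l) * b2) \<le> \<epsilon>" .
  have "l * a1 + (1 - l) * a2 \<le> \<epsilon>"
  proof -
    have "x * (l * a1 + (1 - l) * a2) + (1 - x) * (l * a1 + (1 - l) * a2) = l * a1 + (1 - l) * a2"
      by (simp add: algebra_simps)
    thus ?thesis using comb unfolding same[symmetric] by simp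
  qed
  thus ?thesis using ET EF same by (cases y) auto
qed



definition hps :: "strategy \<Rightarrow> bool list \<Rightarrow> nat \<Rightarrow> real" where
  "hps f xs t = f t (take t xs)"

primrec Alg :: "real set \<Rightarrow> real \<Rightarrow> nat \<Rightarrow> strategy pmf" where
  "Alg S p0 0 = return_pmf (\<lambda>t xs. p0)"
| "Alg S p0 (Suc n) = bind_pmf (Alg S p0 n) (\<lambda>f. map_pmf (\<lambda>g. f(n := g))
      (Pi_pmf {xs. length xs = n} p0 (\<lambda>xs. stepd S p0 (Lap (hps f xs) (\<lambda>t. xs ! t) n))))"

lemma finite_len: "finite {xs :: bool list. length xs = n}"
  using finite_lists_length_eq[of "UNIV :: bool set" n] by simp

lemma Pi_set_fin:
  assumes "finite A" "\<And>x. x \<in> A \<Longrightarrow> finite (set_pmf (p x))"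
  shows "finite (set_pmf (Pi_pmf A dflt p))"
  using set_Pi_pmf_subset'[OF assms(1), of dflt p] finite_PiE_dflt[of A "set_pmf \<circ> p" dflt] assms
  by (auto intro: finite_subset)

lemma Alg_props:
  assumes "finite S" "p0 \<in> S"
  shows "finite (set_pmf (Alg S p0 n)) \<and> (\<forall>f\<in>set_pmf (Alg S p0 n). \<forall>t xs. f t xs \<in> S)"
proof (induction n)
  case 0
  then show ?case using assms by simp
next
  case (Suc n)
  have fin1: "finite (set_pmf (Pi_pmf {xs. length xs = n} p0 (\<lambda>xs. stepd S p0 (Lap (hps f xs) (\<lambda>t. xs ! t) n))))" for f
    using finite_len stepd_set[OF assms] assms(1) by (intro Pi_set_fin) (auto intro: finite_subset)
  have vals: "g xs \<in> S" if "g \<in> set_pmf (Pi_pmf {xs. length xs = n} p0 (\<lambda>xs. stepd S p0 (Lap (hps f xs) (\<lambda>t. xs ! t) n)))" for f g xs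
  proof -
    have "g \<in> PiE_dflt {xs. length xs = n} p0 (set_pmf \<circ> (\<lambda>xs. stepd S p0 (Lap (hps f xs) (\<lambda>t. xs ! t) n)))"
      using subsetD[OF set_Pi_pmf_subset'[OF finite_len[of n]] that] .
    thus ?thesis using stepd_set[OF assms] assms(2) unfolding PiE_dflt_def by (cases "length xs = n") auto
  qed
  show ?case
  proof
    show "finite (set_pmf (Alg S p0 (Suc n)))" using Suc.IH fin1 by simp
    show "\<forall>f\<in>set_pmf (Alg S p0 (Suc n)). \<forall>t xs. f t xs \<in> S"
      using Suc.IH vals by fastforce
  qed
qed

lemma exp_bind:
  fixes h :: "'b \<Rightarrow> real"
  assumes "finite (set_pmf M)" "\<And>x. x \<in> set_pmf M \<Longrightarrow> finite (set_pmf (N x))"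
  shows "measure_pmf.expectation (bind_pmf M N) h = measure_pmf.expectation M (\<lambda>x. measure_pmf.expectation (N x) h)"
proof -
  have "measure_pmf.expectation (bind_pmf M N) h = (\<Sum>a\<in>set_pmf M. pmf M a *\<^sub>R measure_pmf.expectation (N a) h)"
    using assms by (intro pmf_expectation_bind) auto
  also have "\<dots> = measure_pmf.expectation M (\<lambda>x. measure_pmf.expectation (N x) h)"
    using assms by (intro integral_measure_pmf[symmetric]) auto
  finally show ?thesis .
qed

lemma Lap_cong:
  assumes "\<forall>s<t. ps s = ps' s \<and> ys s = ys' s"
  shows "Lap ps ys t p = Lap ps' ys' t p"
proof -
  have "{s. s < t \<and> ps s = p} = {s. s < t \<and> ps' s = p}" "{s. s < t \<and> ys s \<and> ps s = p} = {s. s < t \<and> ys' s \<and> ps' s = p}"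
    using assms by auto
  thus ?thesis unfolding Lap_def cnt_def one_def by simp
qed

lemma D_cong:
  assumes "\<forall>s<n. ps s = ps' s"
  shows "D ps ys n = D ps' ys n"
  unfolding D_def
proof (rule sum.cong[OF refl])
  fix t assume "t \<in> {..<n}"
  hence "Lap ps ys t p = Lap ps' ys t p" for p using assms by (intro Lap_cong) auto
  thus "lr (ps t) (ys t) - lr (Lap ps ys t (ps t)) (ys t) = lr (ps' t) (ys t) - lr (Lap ps' ys t (ps' t)) (ys t)"
    using assms \<open>t \<in> {..<n}\<close> by simp
qed

lemma D_Suc: "D ps ys (Suc n) = D ps ys n + (lr (ps n) (ys n) - lr (Lap ps ys n (ps n)) (ys n))"
  unfolding D_def by simp

lemma preds_upd: "preds (f(n := g)) ys t = (if t = n then g (map ys [0..<n]) else preds f ys t)"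
  unfolding preds_def by simp

lemma Lap_bounds:
  assumes "n < T"
  shows "1 / (real T + 1) \<le> Lap ps ys n p \<and> Lap ps ys n p \<le> real T / (real T + 1)"
proof -
  have c: "cnt ps n p \<le> n" by (rule cnt_le)
  have o: "one ps ys n p \<le> cnt ps n p" by (rule one_le_cnt)
  define c' where "c' = real (cnt ps n p)"
  define o' where "o' = real (one ps ys n p)"
  have hc: "c' + 1 \<le> real T" using c assms unfolding c'_def by linarith
  have ho: "0 \<le> o'" "o' \<le> c'" using o unfolding o'_def c'_def by auto
  have L: "Lap ps ys n p = (o' + 1) / (c' + 2)" unfolding Lap_def o'_def c'_def ..
  have "1 / (real T + 1) \<le> 1 / (c' + 2)" using hc ho by (intro divide_left_mono) auto
  also have "\<dots> \<le> (o' + 1) / (c' + 2)" using ho by (intro divide_right_mono) auto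
  finally have 1: "1 / (real T + 1) \<le> Lap ps ys n p" using L by simp
  have "(o' + 1) / (c' + 2) \<le> (c' + 1) / (c' + 2)" using ho by (intro divide_right_mono) auto
  also have "\<dots> \<le> real T / (real T + 1)" using hc ho by (simp add: field_simps)
  finally show ?thesis using 1 L by simp
qed

locale grid =
  fixes S :: "real set" and p0 :: real and T :: nat and \<epsilon> :: real and a b :: real
  assumes S: "finite S" "S \<subseteq> {0<..<1}" "p0 \<in> S"
    and a: "a \<in> S" "a \<le> 1 / (real T + 1)" and b: "b \<in> S" "real T / (real T + 1) \<le> b"
    and adj: "adjKL S \<epsilon>" and eps: "0 \<le> \<epsilon>"
begin

lemma Alg_exp:
  assumes "n \<le> T"
  shows "measure_pmf.expectation (Alg S p0 n) (\<lambda>f. D (preds f ys) ys n) \<le> real n * \<epsilon>"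
  using assms
proof (induction n)
  case 0
  then show ?case by (simp add: D_def)
next
  case (Suc n)
  hence nT: "n < T" by simp
  note AP = Alg_props[OF S(1) S(3), of n]
  define xs0 where "xs0 = map ys [0..<n]"
  define PI where "PI f = Pi_pmf {xs. length xs = n} p0 (\<lambda>xs. stepd S p0 (Lap (hps f xs) (\<lambda>t. xs ! t) n))" for f
  define W where "W f p = lr p (ys n) - lr (Lap (preds f ys) ys n p) (ys n)" for f p
  have finPI: "finite (set_pmf (PI f))" for f
    unfolding PI_def using finite_len stepd_set[OF S(1) S(3)] S(1)
    by (intro Pi_set_fin) (auto intro: finite_subset)
  have inner: "measure_pmf.expectation (PI f) (\<lambda>g. D (preds (f(n := g)) ys) ys (Suc n))
      \<le> D (preds f ys) ys n + \<epsilon>" if f: "f \<in> set_pmf (Alg S p0 n)" for f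
  proof -
    have eq: "D (preds (f(n := g)) ys) ys (Suc n) = D (preds f ys) ys n + W f (g xs0)" for g
    proof -
      have "D (preds (f(n := g)) ys) ys n = D (preds f ys) ys n"
        by (intro D_cong) (auto simp: preds_upd)
      moreover have "Lap (preds (f(n := g)) ys) ys n p = Lap (preds f ys) ys n p" for p
        by (intro Lap_cong) (auto simp: preds_upd)
      ultimately show ?thesis unfolding D_Suc W_def by (simp add: preds_upd xs0_def)
    qed
    have "measure_pmf.expectation (PI f) (\<lambda>g. D (preds (f(n := g)) ys) ys (Suc n))
        = measure_pmf.expectation (PI f) (\<lambda>g. D (preds f ys) ys n + W f (g xs0))"
      by (simp only: eq)
    also have "\<dots> = D (preds f ys) ys n + measure_pmf.expectation (PI f) (\<lambda>g. W f (g xs0))"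
      using finPI[of f] by (subst Bochner_Integration.integral_add) (auto intro: integrable_measure_pmf_finite)
    also have "measure_pmf.expectation (PI f) (\<lambda>g. W f (g xs0)) = measure_pmf.expectation (map_pmf (\<lambda>g. g xs0) (PI f)) (W f)"
      by simp
    also have "map_pmf (\<lambda>g. g xs0) (PI f) = stepd S p0 (Lap (hps f xs0) (\<lambda>t. xs0 ! t) n)"
      unfolding PI_def by (subst Pi_pmf_component[OF finite_len]) (simp add: xs0_def)
    also have "Lap (hps f xs0) (\<lambda>t. xs0 ! t) n = Lap (preds f ys) ys n"
      by (rule ext, rule Lap_cong) (auto simp: hps_def preds_def xs0_def take_map)
    also have "measure_pmf.expectation (stepd S p0 (Lap (preds f ys) ys n)) (W f) \<le> \<epsilon>"
      unfolding W_def
      by (rule step_bound[OF S a b _ _ _ adj eps])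
         (use Lap_bounds[OF nT] in auto)
    finally show ?thesis by (simp add: fun_upd_def)
  qed
  have "measure_pmf.expectation (Alg S p0 (Suc n)) (\<lambda>f. D (preds f ys) ys (Suc n))
      = measure_pmf.expectation (Alg S p0 n) (\<lambda>f. measure_pmf.expectation (map_pmf (\<lambda>g. f(n := g)) (PI f)) (\<lambda>f. D (preds f ys) ys (Suc n)))"
    unfolding Alg.simps PI_def[symmetric] using AP finPI by (intro exp_bind) auto
  also have "\<dots> = measure_pmf.expectation (Alg S p0 n) (\<lambda>f. measure_pmf.expectation (PI f) (\<lambda>g. D (preds (f(n := g)) ys) ys (Suc n)))"
    by simp
  also have "\<dots> \<le> measure_pmf.expectation (Alg S p0 n) (\<lambda>f. D (preds f ys) ys n + \<epsilon>)"
    using AP inner by (intro integral_mono_AE) (auto intro: integrable_measure_pmf_finite simp: AE_measure_pmf_iff)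
  also have "\<dots> = measure_pmf.expectation (Alg S p0 n) (\<lambda>f. D (preds f ys) ys n) + \<epsilon>"
    using AP by (subst Bochner_Integration.integral_add) (auto intro: integrable_measure_pmf_finite)
  also have "\<dots> \<le> real n * \<epsilon> + \<epsilon>" using Suc nT by simp
  finally show ?case by (simp add: algebra_simps)
qed

end



definition sg :: "real \<Rightarrow> real" where "sg z = exp z / (1 + exp z)"

lemma sg_01: "0 < sg z" "sg z < 1"
  unfolding sg_def by (auto simp: add_pos_pos)

lemma sg_less: "z < w \<Longrightarrow> sg z < sg w"
proof -
  assume "z < w"
  hence "exp z < exp w" by simp
  hence "exp z * (1 + exp w) < exp w * (1 + exp z)" by (simp add: algebra_simps)
  thus "sg z < sg w" unfolding sg_def by (simp add: field_simps add_pos_pos)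
qed

lemma sg_less_iff: "sg z < sg w \<longleftrightarrow> z < w"
  using sg_less[of z w] sg_less[of w z] by (cases z w rule: linorder_cases) auto

lemma sg_KL:
  shows "KL (sg z) (sg (z + x)) \<le> (exp x - 1)^2 / (4 * exp x)"
proof -
  define u where "u = exp z"
  define r where "r = exp x"
  have u: "u > 0" and r: "r > 0" unfolding u_def r_def by auto
  have q: "sg z = u / (1 + u)" unfolding sg_def u_def ..
  have p: "sg (z + x) = u * r / (1 + u * r)" unfolding sg_def u_def r_def by (simp add: exp_add)
  have d: "sg z - sg (z + x) = u * (1 - r) / ((1 + u) * (1 + u * r))"
  proof -
    have ur: "u * r > 0" using u r by simp
    have n1: "1 + u \<noteq> 0" "1 + u * r \<noteq> 0" using u ur by (auto simp: add_pos_pos)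
    have "u / (1 + u) - u * r / (1 + u * r) = (u * (1 + u * r) - u * r * (1 + u)) / ((1 + u) * (1 + u * r))"
      using n1 by (rule diff_frac_eq)
    also have "u * (1 + u * r) - u * r * (1 + u) = u * (1 - r)" by (simp add: algebra_simps)
    finally show ?thesis unfolding q p .
  qed
  have pp: "sg (z + x) * (1 - sg (z + x)) = u * r / (1 + u * r)^2"
  proof -
    have w: "u * r > 0" using u r by simp
    have "1 - u * r / (1 + u * r) = 1 / (1 + u * r)" using w by (simp add: field_simps)
    thus ?thesis unfolding p by (simp add: power2_eq_square)
  qed
  have "KL (sg z) (sg (z + x)) \<le> (sg z - sg (z + x))^2 / (sg (z + x) * (1 - sg (z + x)))"
    using sg_01 by (intro KL_chi) auto
  also have "\<dots> = (u * (1 - r))^2 / ((1 + u)^2 * (1 + u * r)^2) / (u * r / (1 + u * r)^2)"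
    unfolding d pp by (simp add: power_divide power_mult_distrib)
  also have "\<dots> = (u / (1 + u)^2) * ((1 - r)^2 / r)"
  proof -
    have ur: "u * r > 0" using u r by simp
    have A: "(1 + u)^2 > 0" "(1 + u * r)^2 > 0" using u ur by (auto simp: add_pos_pos)
    have g1: "X / (A' * B) / (w / B) = X / (A' * w)" if "B \<noteq> 0" "w \<noteq> 0" "A' \<noteq> 0" for X A' B w :: real
      using that by (simp add: divide_simps)
    have e1: "(u * (1 - r))^2 / ((1 + u)^2 * (1 + u * r)^2) / (u * r / (1 + u * r)^2) = (u * (1 - r))^2 / ((1 + u)^2 * (u * r))"
      using A u r by (intro g1) auto
    have sq: "(u * (1 - r))^2 = u * u * (1 - r)^2" by (simp add: power_mult_distrib power2_eq_square)
    have g2: "u * u * Y / (A' * (u * r)) = (u / A') * (Y / r)" for Y A' :: real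
      using u r by (simp add: field_simps)
    have e2: "(u * (1 - r))^2 / ((1 + u)^2 * (u * r)) = (u / (1 + u)^2) * ((1 - r)^2 / r)"
      using g2[of "(1 - r)^2" "(1 + u)^2"] sq by simp
    show ?thesis using e1 e2 by (rule trans)
  qed
  also have "\<dots> \<le> (1 / 4) * ((1 - r)^2 / r)"
  proof (rule mult_right_mono)
    have "(1 + u)^2 = 4 * u + (1 - u)^2" by (simp add: power2_eq_square algebra_simps)
    hence "4 * u \<le> (1 + u)^2" by simp
    thus "u / (1 + u)^2 \<le> 1 / 4" using u by (simp add: field_simps add_pos_pos)
  qed (use r in simp)
  also have "\<dots> = (exp x - 1)^2 / (4 * exp x)" unfolding r_def by (simp add: power2_commute)
  finally show ?thesis .
qed

definition gridS :: "nat \<Rightarrow> real \<Rightarrow> real set" where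
  "gridS M x = (\<lambda>j::int. sg (x * real_of_int j)) ` {- int M..int M}"

lemma gridS_fin: "finite (gridS M x)" and gridS_card: "card (gridS M x) \<le> 2 * M + 1"
proof -
  show "finite (gridS M x)" unfolding gridS_def by simp
  have "card (gridS M x) \<le> card {- int M..int M}" unfolding gridS_def by (rule card_image_le) simp
  also have "\<dots> = 2 * M + 1" by simp
  finally show "card (gridS M x) \<le> 2 * M + 1" .
qed

lemma gridS_sub: "gridS M x \<subseteq> {0<..<1}"
  unfolding gridS_def using sg_01 by auto

lemma gridS_adj:
  assumes "x > 0"
  shows "adjKL (gridS M x) ((exp x - 1)^2 / (4 * exp x))"
  unfolding adjKL_def
proof (intro ballI impI)
  fix p p' assume pS: "p \<in> gridS M x" and p'S: "p' \<in> gridS M x"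
    and h: "p < p' \<and> (\<forall>q\<in>gridS M x. \<not> (p < q \<and> q < p'))"
  obtain i where i: "i \<in> {- int M..int M}" "p = sg (x * real_of_int i)" using pS unfolding gridS_def by auto
  obtain j where j: "j \<in> {- int M..int M}" "p' = sg (x * real_of_int j)" using p'S unfolding gridS_def by auto
  have "x * real_of_int i < x * real_of_int j" using h i j sg_less_iff by auto
  hence ij: "i < j" using assms by simp
  have "j = i + 1"
  proof (rule ccontr)
    assume "j \<noteq> i + 1"
    hence "i + 1 < j" using ij by simp
    hence mem: "i + 1 \<in> {- int M..int M}" using i j by auto
    have "x * real_of_int i < x * real_of_int (i + 1)" "x * real_of_int (i + 1) < x * real_of_int j"
      using assms \<open>i + 1 < j\<close> by auto
    hence "p < sg (x * real_of_int (i + 1))" "sg (x * real_of_int (i + 1)) < p'"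
      using i j sg_less by auto
    moreover have "sg (x * real_of_int (i + 1)) \<in> gridS M x" unfolding gridS_def
      by (rule image_eqI[where x = "i + 1"]) (use mem in simp_all)
    ultimately show False using h by blast
  qed
  hence "p' = sg (x * real_of_int i + x)" using j by (simp add: algebra_simps)
  thus "KL p p' \<le> (exp x - 1)^2 / (4 * exp x)" using i sg_KL by simp
qed

lemma gridS_mem: "j \<in> {- int M..int M} \<Longrightarrow> sg (x * real_of_int j) \<in> gridS M x"
  unfolding gridS_def by auto

lemma eps_bound:
  fixes x :: real
  assumes "0 < x" "x \<le> 1"
  shows "(exp x - 1)^2 / (4 * exp x) \<le> x^2"
proof -
  have "1 - x \<le> exp (- x)" using exp_ge_add_one_self[of "-x::real"] by simp
  hence "exp x * (1 - x) \<le> exp x * exp (-x)" by (intro mult_left_mono) auto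
  hence "exp x - 1 \<le> x * exp x" by (simp add: exp_minus algebra_simps)
  moreover have "0 \<le> exp x - 1" using assms by simp
  ultimately have "(exp x - 1)^2 \<le> (x * exp x)^2" by (intro power_mono) auto
  hence "(exp x - 1)^2 / (4 * exp x) \<le> (x * exp x)^2 / (4 * exp x)" by (intro divide_right_mono) auto
  also have "\<dots> = x^2 * (exp x / 4)" by (simp add: power2_eq_square field_simps)
  also have "\<dots> \<le> x^2 * 1"
  proof (intro mult_left_mono)
    have "exp x \<le> exp 1" using assms by simp
    thus "exp x / 4 \<le> 1" using exp_le by linarith
  qed simp
  finally show ?thesis by simp
qed



lemma numeric:
  fixes T :: nat
  assumes T: "T \<ge> 2"
  defines "u \<equiv> real T powr (1/3) * ln (real T) powr (2/3)"
  shows "ln (real T) \<le> u" "1/2 \<le> u"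
    "real T * (ln (real T) / real (nat \<lceil>u\<rceil>))^2 + (2 * real (nat \<lceil>u\<rceil>) + 1) * ln (real T + 1)
      \<le> 18 * real T powr (1/3) * ln (real T) powr (5/3)"
proof -
  define t where "t = real T"
  define l where "l = ln t"
  have t2: "t \<ge> 2" using T unfolding t_def by simp
  have ln2: "ln (2::real) \<ge> 1/2"
  proof -
    have "ln (1/2::real) \<le> 1/2 - 1" by (rule ln_le_minus_one) auto
    thus ?thesis by (simp add: ln_div)
  qed
  have "ln (2::real) \<le> ln t" using t2 by simp
  hence l2: "l \<ge> 1/2" unfolding l_def using ln2 by linarith
  have lpos: "l > 0" using l2 by simp
  have lt: "l \<le> t" unfolding l_def using ln_le_minus_one[of t] t2 by simp
  define a where "a = t powr (1/3)"
  define c where "c = l powr (1/3)"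
  have a3: "a^3 = t" unfolding a_def using t2 by (subst powr_power) auto
  have c3: "c^3 = l" unfolding c_def using lpos by (subst powr_power) auto
  have c2: "l powr (2/3) = c^2" unfolding c_def using lpos by (subst powr_power) auto
  have c5: "l powr (5/3) = c^5" unfolding c_def using lpos by (subst powr_power) auto
  have apos: "a \<ge> 1" unfolding a_def using t2 by (intro ge_one_powr_ge_zero) auto
  have cpos: "c > 0" unfolding c_def using lpos by simp
  have ca: "c \<le> a" unfolding a_def c_def using lt lpos by (intro powr_mono2) auto
  have u: "u = a * c^2" unfolding u_def a_def c2[symmetric] t_def[symmetric] l_def[symmetric] ..
  have B: "real T powr (1/3) * ln (real T) powr (5/3) = u * l"
  proof -
    have "real T powr (1/3) * ln (real T) powr (5/3) = a * c^5"
      unfolding t_def[symmetric] l_def[symmetric] a_def[symmetric] c5 ..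
    also have "a * c^5 = (a * c^2) * c^3" by (simp add: power_add[symmetric])
    finally show ?thesis unfolding u c3 .
  qed
  have lu: "l \<le> u"
  proof -
    have "c^3 = c * c^2" by (simp add: power_Suc[symmetric] numeral_3_eq_3)
    also have "\<dots> \<le> a * c^2" using ca cpos by (intro mult_right_mono) auto
    finally show ?thesis using c3 u by simp
  qed
  thus "ln (real T) \<le> u" unfolding l_def t_def .
  have uh: "1/2 \<le> u" using lu l2 by simp
  thus "1/2 \<le> u" .
  define M where "M = real (nat \<lceil>u\<rceil>)"
  have M1: "u \<le> M" "M \<le> u + 1" unfolding M_def using uh by linarith+
  have upos: "u > 0" using uh by simp
  have "t * (l / M)^2 \<le> t * (l / u)^2"
    using M1 upos lpos t2 by (intro mult_left_mono power_mono divide_left_mono) auto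
  also have "t * (l / u)^2 = u"
  proof -
    have "t * l^2 = u^3" unfolding u a3[symmetric] c3[symmetric] by (simp add: power_mult_distrib flip: power_mult)
    thus ?thesis using upos by (simp add: power_divide field_simps power2_eq_square power3_eq_cube)
  qed
  also have "u \<le> 2 * (u * l)"
  proof -
    have "u * 1 \<le> u * (2 * l)" using l2 upos by (intro mult_left_mono) auto
    thus ?thesis by (simp add: algebra_simps)
  qed
  finally have t1: "t * (l / M)^2 \<le> 2 * (u * l)" .
  have lt1: "ln (t + 1) \<le> 2 * l"
  proof -
    have "2 * t \<le> t * t" using t2 by (intro mult_right_mono) auto
    hence "t + 1 \<le> t^2" unfolding power2_eq_square using t2 by linarith
    hence "ln (t + 1) \<le> ln (t^2)" using t2 by (subst ln_le_cancel_iff) auto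
    thus ?thesis unfolding l_def using t2 by (simp add: ln_realpow)
  qed
  have "(2 * M + 1) * ln (t + 1) \<le> (2 * (u + 1) + 1) * (2 * l)"
    using M1 lt1 t2 upos by (intro mult_mono) auto
  also have "\<dots> = 4 * (u * l) + 6 * l" by (simp add: algebra_simps)
  also have "\<dots> \<le> 4 * (u * l) + 12 * (u * l)"
  proof -
    have "1 * l \<le> (2 * u) * l" using uh lpos by (intro mult_right_mono) auto
    thus ?thesis by (simp add: algebra_simps)
  qed
  finally have t2': "(2 * M + 1) * ln (t + 1) \<le> 16 * (u * l)" by (simp add: mult.commute)
  show "real T * (ln (real T) / real (nat \<lceil>u\<rceil>))^2 + (2 * real (nat \<lceil>u\<rceil>) + 1) * ln (real T + 1)
      \<le> 18 * real T powr (1/3) * ln (real T) powr (5/3)"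
    using t1 t2' B unfolding M_def[symmetric] t_def[symmetric] l_def[symmetric] by (simp add: mult.assoc)
qed



lemma adjKL_mono: "adjKL S e \<Longrightarrow> e \<le> e' \<Longrightarrow> adjKL S e'"
  unfolding adjKL_def by force

theorem theorem1:
  "\<exists>C::real. \<forall>T::nat. T \<ge> 2 \<longrightarrow>
     (\<exists>(A :: strategy pmf) (S :: real set).
        finite S \<and> S \<subseteq> {0<..<1} \<and>
        (\<forall>f\<in>set_pmf A. \<forall>t xs. f t xs \<in> S) \<and>
        (\<forall>ys :: nat \<Rightarrow> bool.
           (\<integral>\<^sup>+ f. e2ennreal (SReg T (preds f ys) ys) \<partial>measure_pmf A)
             \<le> ennreal (C * real T powr (1/3) * ln (real T) powr (5/3)) \<and>
           (\<integral>\<^sup>+ f. ennreal (KLCal T (preds f ys) ys) \<partial>measure_pmf A)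
             \<le> ennreal (C * real T powr (1/3) * ln (real T) powr (5/3))))"
proof (intro exI[of _ 18] allI impI)
  fix T :: nat assume T: "T \<ge> 2"
  define u where "u = real T powr (1/3) * ln (real T) powr (2/3)"
  define M where "M = nat \<lceil>u\<rceil>"
  define x where "x = ln (real T) / real M"
  define S where "S = gridS M x"
  define p0 :: real where "p0 = 1/2"
  define BND where "BND = 18 * real T powr (1/3) * ln (real T) powr (5/3)"
  note num = numeric[OF T, folded u_def]
  have lnT: "ln (real T) > 0" using T by simp
  have M0: "real M \<ge> u" unfolding M_def by linarith
  have Mpos: "real M > 0" using M0 num(2) by simp
  have x0: "x > 0" unfolding x_def using lnT Mpos by simp
  have x1: "x \<le> 1" unfolding x_def using num(1) M0 Mpos by simp
  have xM: "x * real M = ln (real T)" unfolding x_def using Mpos by simp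
  have Tpos: "real T > 0" using T by simp
  have finS: "finite S" unfolding S_def by (rule gridS_fin)
  have subS: "S \<subseteq> {0<..<1}" unfolding S_def by (rule gridS_sub)
  have p0S: "p0 \<in> S"
  proof -
    have "sg (x * real_of_int 0) \<in> S" unfolding S_def by (rule gridS_mem) simp
    thus ?thesis by (simp add: sg_def p0_def)
  qed
  have aS: "1 / (real T + 1) \<in> S"
  proof -
    have "sg (x * real_of_int (- int M)) \<in> S" unfolding S_def by (rule gridS_mem) simp
    moreover have "x * real_of_int (- int M) = - ln (real T)" using xM by simp
    moreover have "sg (- ln (real T)) = 1 / (real T + 1)"
      unfolding sg_def using Tpos by (simp add: exp_minus field_simps)
    ultimately show ?thesis by simp
  qed
  have bS: "real T / (real T + 1) \<in> S"
  proof -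
    have "sg (x * real_of_int (int M)) \<in> S" unfolding S_def by (rule gridS_mem) simp
    moreover have "sg (ln (real T)) = real T / (real T + 1)"
      unfolding sg_def using Tpos by (simp add: field_simps)
    ultimately show ?thesis using xM by simp
  qed
  have adj: "adjKL S (x^2)"
    unfolding S_def using gridS_adj[OF x0, of M] eps_bound[OF x0 x1] by (rule adjKL_mono)
  interpret grid S p0 T "x^2" "1 / (real T + 1)" "real T / (real T + 1)"
    by unfold_locales (use finS subS p0S aS bS adj in auto)
  define A where "A = Alg S p0 T"
  note AP = Alg_props[OF finS p0S, of T, folded A_def]
  have cardS: "real (card S) \<le> 2 * real M + 1" unfolding S_def using gridS_card[of M x] by linarith
  have total: "real T * x^2 + real (card S) * ln (real T + 1) \<le> BND"
  proof -
    have "real (card S) * ln (real T + 1) \<le> (2 * real M + 1) * ln (real T + 1)"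
      using cardS T by (intro mult_right_mono) auto
    thus ?thesis using num(3) unfolding BND_def x_def M_def by simp
  qed
  show "\<exists>A S. finite S \<and> S \<subseteq> {0<..<1} \<and> (\<forall>f\<in>set_pmf A. \<forall>t xs. f t xs \<in> S) \<and>
      (\<forall>ys. (\<integral>\<^sup>+ f. e2ennreal (SReg T (preds f ys) ys) \<partial>measure_pmf A)
             \<le> ennreal (18 * real T powr (1/3) * ln (real T) powr (5/3)) \<and>
           (\<integral>\<^sup>+ f. ennreal (KLCal T (preds f ys) ys) \<partial>measure_pmf A)
             \<le> ennreal (18 * real T powr (1/3) * ln (real T) powr (5/3)))"
  proof (intro exI[of _ A] exI[of _ S] conjI allI)
    show "finite S" "S \<subseteq> {0<..<1}" by (fact finS, fact subS)
    show "\<forall>f\<in>set_pmf A. \<forall>t xs. f t xs \<in> S" using AP by blast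
    fix ys :: "nat \<Rightarrow> bool"
    define Q where "Q f = D (preds f ys) ys T + real (card S) * ln (real T + 1)" for f
    have psS: "\<forall>t<T. preds f ys t \<in> S" if "f \<in> set_pmf A" for f
      using AP that unfolding preds_def by blast
    have SQ: "SReg T (preds f ys) ys \<le> ereal (Q f)" if "f \<in> set_pmf A" for f
      unfolding Q_def by (rule SReg_le[OF finS subS psS[OF that]])
    have KQ: "KLCal T (preds f ys) ys \<le> Q f" if "f \<in> set_pmf A" for f
      unfolding Q_def by (rule KLCal_le[OF finS subS psS[OF that]])
    have Q0: "0 \<le> Q f" if "f \<in> set_pmf A" for f
    proof -
      have "(0::ereal) \<le> ereal (Q f)" using SReg_nonneg[OF subS psS[OF that], of ys] SQ[OF that] by (rule order.trans)
      thus ?thesis by simp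
    qed
    have intQ: "integrable (measure_pmf A) Q" using AP by (intro integrable_measure_pmf_finite) auto
    have intD: "integrable (measure_pmf A) (\<lambda>f. D (preds f ys) ys T)" using AP by (intro integrable_measure_pmf_finite) auto
    have EQ: "measure_pmf.expectation A Q \<le> BND"
    proof -
      have "measure_pmf.expectation A Q = measure_pmf.expectation A (\<lambda>f. D (preds f ys) ys T) + real (card S) * ln (real T + 1)"
        unfolding Q_def using intD by (subst Bochner_Integration.integral_add) auto
      also have "\<dots> \<le> real T * x^2 + real (card S) * ln (real T + 1)"
        using Alg_exp[of T ys] unfolding A_def by simp
      finally show ?thesis using total by simp
    qed
    have NQ: "(\<integral>\<^sup>+ f. ennreal (Q f) \<partial>measure_pmf A) \<le> ennreal BND"
    proof -
      have "(\<integral>\<^sup>+ f. ennreal (Q f) \<partial>measure_pmf A) = ennreal (measure_pmf.expectation A Q)"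
        using intQ Q0 by (intro nn_integral_eq_integral) (auto simp: AE_measure_pmf_iff)
      also have "\<dots> \<le> ennreal BND" using EQ by (rule ennreal_leI)
      finally show ?thesis .
    qed
    have "(\<integral>\<^sup>+ f. e2ennreal (SReg T (preds f ys) ys) \<partial>measure_pmf A) \<le> (\<integral>\<^sup>+ f. ennreal (Q f) \<partial>measure_pmf A)"
    proof (rule nn_integral_mono_AE)
      show "AE f in measure_pmf A. e2ennreal (SReg T (preds f ys) ys) \<le> ennreal (Q f)"
        unfolding AE_measure_pmf_iff using SQ e2ennreal_mono by (metis e2ennreal_ereal)
    qed
    thus "(\<integral>\<^sup>+ f. e2ennreal (SReg T (preds f ys) ys) \<partial>measure_pmf A) \<le> ennreal (18 * real T powr (1/3) * ln (real T) powr (5/3))"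
      using NQ unfolding BND_def by simp
    have "(\<integral>\<^sup>+ f. ennreal (KLCal T (preds f ys) ys) \<partial>measure_pmf A) \<le> (\<integral>\<^sup>+ f. ennreal (Q f) \<partial>measure_pmf A)"
    proof (rule nn_integral_mono_AE)
      show "AE f in measure_pmf A. ennreal (KLCal T (preds f ys) ys) \<le> ennreal (Q f)"
        unfolding AE_measure_pmf_iff using KQ by (auto intro: ennreal_leI)
    qed
    thus "(\<integral>\<^sup>+ f. ennreal (KLCal T (preds f ys) ys) \<partial>measure_pmf A) \<le> ennreal (18 * real T powr (1/3) * ln (real T) powr (5/3))"
      using NQ unfolding BND_def by simp
  qed
qed

end
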